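(* Consider Phase-1 training with learning rate $\alpha>0$ on a fixed batch of size $N$, fix $a_\star\in(0,1]$ and let $T_\star := \min\{t:|a_t|\ge a_\star\}$. Let $q_\star := c_0/\sqrt N>0$. Assume $\mathrm{sign}(a_0) = \mathrm{sign}(q_0)$, $|q_0|\ge q_\star$, and $\alpha a_\star\|\widehat M\|_2\le\frac12$. Then \[ \|w_{T_\star} - w_0\|_2 \le \frac{8\|\widehat M\|_2}{q_\star}a_\star(a_\star - |a_0|)_+ + 4\alpha\|\widehat M\|_2 a_\star . \]
   Context: $\widehat M := \frac1N\sum_{s=1}^N y^{(s)}x^{(s)}x^{(s)\top}$ for samples $x^{(s)}\in\{\pm1\}^d$, $y^{(s)} = x^{(s)}_1x^{(s)}_2$. Phase-1 updates: $a_{t+1} = \mathrm{clip}_{[-1,1]}(a_t + \frac\alpha2 q_t)$, $w_{t+1} = \frac{w_t+\alpha a_t\widehat Mw_t}{\|w_t+\alpha a_t\widehat Mw_t\|_2}$, $q_t := w_t^\top\widehat Mw_t$, with $w_0$ a unit vector. $c_0>0$ is a constant. $(z)_+ = \max\{z,0\}$, and $\|\widehat M\|_2$ is the operator norm. *)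

theory Defs
  imports "HOL-Analysis.Analysis"
begin

definition outer :: "real^'d \<Rightarrow> real^'d \<Rightarrow> real^'d^'d" where
  "outer x z = (\<chi> i j. x $ i * z $ j)"

definition Mhat :: "nat \<Rightarrow> (nat \<Rightarrow> real^'d) \<Rightarrow> 'd \<Rightarrow> 'd \<Rightarrow> real^'d^'d" where
  "Mhat N X i1 i2 = (1 / real N) *\<^sub>R (\<Sum>s<N. ((X s $ i1) * (X s $ i2)) *\<^sub>R outer (X s) (X s))"

definition opnorm2 :: "real^'d^'d \<Rightarrow> real" where
  "opnorm2 M = onorm (\<lambda>v. M *v v)"

definition clip1 :: "real \<Rightarrow> real" where
  "clip1 z = max (-1) (min 1 z)"

definition posp :: "real \<Rightarrow> real" where
  "posp z = max z 0"

end

theory Submission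
  imports Defs
begin

lemma opnorm2_bnd: "norm (M *v v) \<le> opnorm2 M * norm v" and opnorm2_nonneg: "0 \<le> opnorm2 M"
  unfolding opnorm2_def
  using onorm[OF matrix_vector_mul_bounded_linear[of M]] onorm_pos_le[OF matrix_vector_mul_bounded_linear[of M]]
  by auto

lemma Mhat_sym: "(Mhat N X i1 i2 *v u) \<bullet> v = u \<bullet> (Mhat N X i1 i2 *v v)"
proof -
  have T: "transpose (Mhat N X i1 i2) = Mhat N X i1 i2"
    by (simp add: transpose_def Mhat_def outer_def vec_eq_iff mult.commute mult.left_commute)
  have "(Mhat N X i1 i2 *v u) \<bullet> v = (u v* transpose (Mhat N X i1 i2)) \<bullet> v" by simp
  also have "\<dots> = u \<bullet> (Mhat N X i1 i2 *v v)" using dot_lmul_matrix T by metis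
  finally show ?thesis .
qed

lemma step_norm:
  fixes w e :: "real^'n"
  assumes "norm w = 1" "w + e \<noteq> 0"
  shows "norm ((1 / norm (w + e)) *\<^sub>R (w + e) - w) \<le> 2 * norm e"
proof -
  let ?v = "w + e"
  have "norm ((1 / norm ?v) *\<^sub>R ?v - w) \<le> norm ((1 / norm ?v) *\<^sub>R ?v - ?v) + norm (?v - w)"
    by (metis add_diff_cancel add_diff_eq norm_triangle_ineq diff_add_cancel)
  also have "norm ((1 / norm ?v) *\<^sub>R ?v - ?v) = \<bar>1 - norm ?v\<bar>"
  proof -
    have "(1 / norm ?v) *\<^sub>R ?v - ?v = (1 / norm ?v - 1) *\<^sub>R ?v" by (simp add: algebra_simps)
    hence "norm ((1 / norm ?v) *\<^sub>R ?v - ?v) = \<bar>1 / norm ?v - 1\<bar> * norm ?v" by simp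
    also have "\<dots> = \<bar>1 - norm ?v\<bar>" using assms(2)
      by (simp add: abs_mult_pos' abs_minus_commute field_simps flip: abs_mult)
    finally show ?thesis .
  qed
  also have "\<bar>1 - norm ?v\<bar> \<le> norm e"
    using norm_triangle_ineq3[of ?v w] assms(1) by (simp add: abs_minus_commute)
  finally show ?thesis by simp
qed

lemma rayleigh:
  fixes M :: "real^'n^'n" and w :: "real^'n"
  assumes sym: "\<And>u v. (M *v u) \<bullet> v = u \<bullet> (M *v v)"
    and bnd: "\<And>v. norm (M *v v) \<le> K * norm v"
    and nw: "norm w = 1" and eta: "\<bar>\<eta>\<bar> * K \<le> 1/2"
  shows "w + \<eta> *\<^sub>R (M *v w) \<noteq> 0"
    and "\<eta> * (((1 / norm (w + \<eta> *\<^sub>R (M *v w))) *\<^sub>R (w + \<eta> *\<^sub>R (M *v w))) \<bullet>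
           (M *v ((1 / norm (w + \<eta> *\<^sub>R (M *v w))) *\<^sub>R (w + \<eta> *\<^sub>R (M *v w)))))
         \<ge> \<eta> * (w \<bullet> (M *v w))"
proof -
  define y where "y = w + \<eta> *\<^sub>R (M *v w)"
  define \<beta> where "\<beta> u v = u \<bullet> v + \<eta> * (u \<bullet> (M *v v))" for u v
  have psd: "\<beta> u u \<ge> (norm u)^2 / 2" for u
  proof -
    have "\<bar>u \<bullet> (M *v u)\<bar> \<le> norm u * norm (M *v u)" by (rule Cauchy_Schwarz_ineq2)
    also have "\<dots> \<le> norm u * (K * norm u)" by (simp add: bnd mult_left_mono)
    finally have h: "\<bar>u \<bullet> (M *v u)\<bar> \<le> K * (norm u)^2" by (simp add: power2_eq_square mult_ac)
    have "\<bar>\<eta> * (u \<bullet> (M *v u))\<bar> \<le> \<bar>\<eta>\<bar> * (K * (norm u)^2)"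
      by (simp add: abs_mult h mult_left_mono)
    also have "\<dots> = (\<bar>\<eta>\<bar> * K) * (norm u)^2" by simp
    also have "\<dots> \<le> 1/2 * (norm u)^2" using mult_right_mono[OF eta zero_le_power2[of "norm u"]] by simp
    finally show ?thesis unfolding \<beta>_def by (simp add: dot_square_norm) 
  qed
  have bsym: "\<beta> u v = \<beta> v u" for u v unfolding \<beta>_def using sym[of u v] sym[of v u] by (simp add: inner_commute)
  have bexp: "\<beta> (u - t *\<^sub>R v) (u - t *\<^sub>R v) = \<beta> u u - 2 * t * \<beta> u v + t^2 * \<beta> v v" for u v t
  proof -
    have "t * (v \<bullet> u + \<eta> * (v \<bullet> (M *v u))) = t * (u \<bullet> v + \<eta> * (u \<bullet> (M *v v)))"
      using bsym[of v u] unfolding \<beta>_def by simp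
    then show ?thesis unfolding \<beta>_def
      by (simp add: algebra_simps inner_diff_left inner_diff_right power2_eq_square)
  qed
  have cs: "(\<beta> u v)^2 \<le> \<beta> u u * \<beta> v v" if "v \<noteq> 0" for u v
  proof -
    have pos: "\<beta> v v > 0" proof -
      have "(norm v)^2 / 2 > 0" using that by simp
      then show ?thesis using psd[of v] by linarith
    qed
    have "0 \<le> \<beta> (u - (\<beta> u v / \<beta> v v) *\<^sub>R v) (u - (\<beta> u v / \<beta> v v) *\<^sub>R v)"
      by (rule order_trans[OF _ psd]) simp
    also have "\<dots> = \<beta> u u - (\<beta> u v)^2 / \<beta> v v" unfolding bexp using pos
      by (simp add: field_simps power2_eq_square)
    finally show ?thesis using pos by (simp add: field_simps)
  qed
  have P: "\<beta> w w = w \<bullet> y" unfolding \<beta>_def y_def by (simp add: inner_add_right)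
  have Ppos: "w \<bullet> y \<ge> 1/2" using psd[of w] nw P by simp
  have ynz: "y \<noteq> 0" using Ppos by auto
  then show "w + \<eta> *\<^sub>R (M *v w) \<noteq> 0" unfolding y_def .
  have Y: "\<beta> w y = y \<bullet> y" unfolding \<beta>_def y_def
    by (simp add: inner_add_left inner_add_right matrix_vector_right_distrib matrix_vector_mult_scaleR sym)
  have c1: "(y \<bullet> y)^2 \<le> (w \<bullet> y) * \<beta> y y" using cs[OF ynz, of w] Y P by simp
  have c2: "(w \<bullet> y)^2 \<le> y \<bullet> y" using Cauchy_Schwarz_ineq[of w y] nw by (simp add: dot_square_norm)
  have Yp: "y \<bullet> y > 0" using ynz by simp
  have Q: "\<beta> y y \<ge> (w \<bullet> y) * (y \<bullet> y)"
  proof -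
    have "(w \<bullet> y) * ((w \<bullet> y) * (y \<bullet> y)) \<le> (y \<bullet> y) * (y \<bullet> y)"
      using mult_right_mono[OF c2, of "y \<bullet> y"] Yp by (simp add: power2_eq_square mult.assoc)
    also have "\<dots> \<le> (w \<bullet> y) * \<beta> y y" using c1 by (simp add: power2_eq_square)
    finally show ?thesis using Ppos by (simp add: mult_le_cancel_left)
  qed
  have lhs: "\<eta> * (((1 / norm y) *\<^sub>R y) \<bullet> (M *v ((1 / norm y) *\<^sub>R y))) = \<beta> y y / (y \<bullet> y) - 1"
    unfolding \<beta>_def using Yp by (simp add: matrix_vector_mult_scaleR dot_square_norm field_simps power2_eq_square) (simp add: add_divide_distrib ynz)
  have rhs: "\<eta> * (w \<bullet> (M *v w)) = w \<bullet> y - 1" using P nw unfolding \<beta>_def by (simp add: dot_square_norm)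
  have "w \<bullet> y \<le> \<beta> y y / (y \<bullet> y)" using Q Yp by (simp add: field_simps)
  then show "\<eta> * (((1 / norm (w + \<eta> *\<^sub>R (M *v w))) *\<^sub>R (w + \<eta> *\<^sub>R (M *v w))) \<bullet>
           (M *v ((1 / norm (w + \<eta> *\<^sub>R (M *v w))) *\<^sub>R (w + \<eta> *\<^sub>R (M *v w)))))
         \<ge> \<eta> * (w \<bullet> (M *v w))" using lhs rhs unfolding y_def by linarith
qed

theorem lemma11:
  fixes N :: nat and X :: "nat \<Rightarrow> real^'d" and i1 i2 :: 'd
    and \<alpha> a_star c0 :: real and a :: "nat \<Rightarrow> real" and w :: "nat \<Rightarrow> real^'d"
  assumes "i1 \<noteq> i2"
    and "N \<ge> 1"
    and "\<And>s i. s < N \<Longrightarrow> X s $ i = 1 \<or> X s $ i = -1"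
    and "\<alpha> > 0" and "c0 > 0"
    and "0 < a_star" and "a_star \<le> 1"
    and "norm (w 0) = 1"
    and "\<And>t. a (Suc t) = clip1 (a t + \<alpha> / 2 * (w t \<bullet> (Mhat N X i1 i2 *v w t)))"
    and "\<And>t. w (Suc t) = (1 / norm (w t + (\<alpha> * a t) *\<^sub>R (Mhat N X i1 i2 *v w t)))
                          *\<^sub>R (w t + (\<alpha> * a t) *\<^sub>R (Mhat N X i1 i2 *v w t))"
    and "\<exists>t. \<bar>a t\<bar> \<ge> a_star"
    and "sgn (a 0) = sgn (w 0 \<bullet> (Mhat N X i1 i2 *v w 0))"
    and "\<bar>w 0 \<bullet> (Mhat N X i1 i2 *v w 0)\<bar> \<ge> c0 / sqrt (real N)"
    and "\<alpha> * a_star * opnorm2 (Mhat N X i1 i2) \<le> 1 / 2"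
  shows "norm (w (LEAST t. \<bar>a t\<bar> \<ge> a_star) - w 0)
         \<le> 8 * opnorm2 (Mhat N X i1 i2) / (c0 / sqrt (real N)) * a_star * posp (a_star - \<bar>a 0\<bar>)
           + 4 * \<alpha> * opnorm2 (Mhat N X i1 i2) * a_star"
  proof -
  let ?M = "Mhat N X i1 i2"
  define K where "K = opnorm2 ?M"
  define qs where "qs = c0 / sqrt (real N)"
  define q where "q t = w t \<bullet> (?M *v w t)" for t
  define T where "T = (LEAST t. a_star \<le> \<bar>a t\<bar>)"
  have K0: "K \<ge> 0" unfolding K_def by (rule opnorm2_nonneg)
  have bnd: "norm (?M *v v) \<le> K * norm v" for v unfolding K_def by (rule opnorm2_bnd)
  have qs0: "qs > 0" unfolding qs_def using assms(2,5) by simp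
  have aT: "a_star \<le> \<bar>a T\<bar>" unfolding T_def using assms(11) by (rule LeastI_ex)
  have belowT: "\<bar>a t\<bar> < a_star" if "t < T" for t
    using not_less_Least[OF that[unfolded T_def]] by simp
  have pp: "posp z \<ge> 0" for z unfolding posp_def by simp
  show ?thesis
  proof (cases "T = 0")
    case True
    have "0 \<le> 8 * K / qs * a_star * posp (a_star - \<bar>a 0\<bar>)"
      using K0 qs0 assms(6) pp by simp
    moreover have "0 \<le> 4 * \<alpha> * K * a_star" using K0 assms(4,6) by simp
    ultimately show ?thesis using True unfolding T_def K_def qs_def by simp
  next
    case False
    have a0lt: "\<bar>a 0\<bar> < a_star" using belowT False by simp
    have q0: "\<bar>q 0\<bar> \<ge> qs" unfolding q_def qs_def using assms(13) by simp
    have q0nz: "q 0 \<noteq> 0" using q0 qs0 by auto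
    have a0nz: "a 0 \<noteq> 0" using assms(12) q0nz unfolding q_def by (auto simp: sgn_zero_iff)
    define s where "s = sgn (a 0)"
    have s1: "s = 1 \<or> s = -1" unfolding s_def using a0nz by (auto simp: sgn_real_def)
    have sa0: "s * a 0 = \<bar>a 0\<bar>" unfolding s_def by (simp add: abs_sgn mult.commute sgn_mult_abs)
    have sq0: "s * q 0 = \<bar>q 0\<bar>" unfolding s_def using assms(12) unfolding q_def
      by (simp add: abs_sgn mult.commute sgn_mult_abs)
    have eta: "\<bar>\<alpha> * a t\<bar> * K \<le> 1/2" if "t < T" for t
    proof -
      have "\<bar>\<alpha> * a t\<bar> * K = \<alpha> * (\<bar>a t\<bar> * K)" using assms(4) by (simp add: abs_mult)
      also have "\<dots> \<le> \<alpha> * (a_star * K)"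
        using belowT[OF that] K0 assms(4) by (intro mult_left_mono mult_right_mono) auto
      finally show ?thesis using assms(14) unfolding K_def by (simp add: mult.assoc)
    qed
    have inv: "t < T \<longrightarrow> norm (w t) = 1 \<and> s * a t > 0 \<and> s * q t \<ge> qs
                 \<and> s * a t \<ge> \<bar>a 0\<bar> + real t * (\<alpha> * qs / 2)" for t
    proof (induction t)
      case 0
      show ?case using assms(8) sa0 a0nz sq0 q0 by simp
    next
      case (Suc t)
      show ?case
      proof
        assume St: "Suc t < T"
        hence tT: "t < T" by simp
        have IH: "norm (w t) = 1" "s * a t > 0" "s * q t \<ge> qs" "s * a t \<ge> \<bar>a 0\<bar> + real t * (\<alpha> * qs / 2)"
          using Suc tT by auto
        note ray = rayleigh[OF Mhat_sym bnd IH(1) eta[OF tT]]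
        have wS: "w (Suc t) = (1 / norm (w t + (\<alpha> * a t) *\<^sub>R (?M *v w t))) *\<^sub>R (w t + (\<alpha> * a t) *\<^sub>R (?M *v w t))"
          by (rule assms(10))
        have n1: "norm (w (Suc t)) = 1" unfolding wS using ray(1) by simp
        have qmono: "(\<alpha> * a t) * (q (Suc t) - q t) \<ge> 0"
          using ray(2) unfolding q_def wS[symmetric] by (simp add: algebra_simps)
        have E: "(\<alpha> * (s * a t)) * (s * (q (Suc t) - q t)) = (s * s) * ((\<alpha> * a t) * (q (Suc t) - q t))"
          by (simp add: algebra_simps)
        have ss: "s * s = 1" using s1 by auto
        have "(\<alpha> * (s * a t)) * (s * (q (Suc t) - q t)) \<ge> 0" using qmono E ss by (metis mult_1_left)
        moreover have "\<alpha> * (s * a t) > 0" using assms(4) IH(2) by simp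
        ultimately have "s * (q (Suc t) - q t) \<ge> 0" by (simp add: zero_le_mult_iff)
        hence qS: "s * q (Suc t) \<ge> qs" using IH(3) by (simp add: algebra_simps)
        define z where "z = a t + \<alpha> / 2 * q t"
        have aS: "a (Suc t) = clip1 z" unfolding z_def q_def by (rule assms(9))
        have "clip1 z = z \<or> clip1 z = 1 \<or> clip1 z = -1" unfolding clip1_def by auto
        moreover have "\<bar>a (Suc t)\<bar> < a_star" using belowT[OF St] .
        ultimately have azS: "a (Suc t) = z" using aS assms(7) by auto
        have "s * z = s * a t + \<alpha> / 2 * (s * q t)" unfolding z_def by (simp add: algebra_simps)
        moreover have "\<alpha> / 2 * (s * q t) \<ge> \<alpha> / 2 * qs" using IH(3) assms(4) by simp
        moreover have "real (Suc t) * (\<alpha> * qs / 2) = real t * (\<alpha> * qs / 2) + \<alpha> / 2 * qs"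
          by (simp add: algebra_simps)
        ultimately have "s * z \<ge> \<bar>a 0\<bar> + real (Suc t) * (\<alpha> * qs / 2)"
          using IH(4) by linarith
        moreover have "\<bar>a 0\<bar> + real (Suc t) * (\<alpha> * qs / 2) > 0"
          using assms(4) qs0 by (simp add: add_nonneg_pos)
        ultimately show "norm (w (Suc t)) = 1 \<and> s * a (Suc t) > 0 \<and> s * q (Suc t) \<ge> qs
                 \<and> s * a (Suc t) \<ge> \<bar>a 0\<bar> + real (Suc t) * (\<alpha> * qs / 2)"
          using n1 qS azS by simp
      qed
    qed
    have stepb: "norm (w (Suc t) - w t) \<le> 2 * \<alpha> * a_star * K" if tT: "t < T" for t
    proof -
      have n: "norm (w t) = 1" using inv[of t] tT by simp
      note ray = rayleigh[OF Mhat_sym bnd n eta[OF tT]]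
      have "norm (w (Suc t) - w t) \<le> 2 * norm ((\<alpha> * a t) *\<^sub>R (?M *v w t))"
        unfolding assms(10)[of t] by (rule step_norm[OF n ray(1)])
      also have "\<dots> = 2 * (\<alpha> * \<bar>a t\<bar>) * norm (?M *v w t)" using assms(4) by (simp add: abs_mult)
      also have "\<dots> \<le> 2 * (\<alpha> * a_star) * K"
      proof -
        have "norm (?M *v w t) \<le> K" using bnd[of "w t"] n by simp
        moreover have "\<alpha> * \<bar>a t\<bar> \<le> \<alpha> * a_star" using belowT[OF tT] assms(4) by simp
        ultimately show ?thesis using K0 assms(4)
          by (intro mult_left_mono mult_mono) auto
      qed
      finally show ?thesis by (simp add: mult.assoc)
    qed
    have "w T - w 0 = (\<Sum>t<T. w (Suc t) - w t)" by (simp add: sum_lessThan_telescope)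
    hence "norm (w T - w 0) \<le> (\<Sum>t<T. norm (w (Suc t) - w t))" by (simp add: norm_sum)
    also have "\<dots> \<le> (\<Sum>t<T. 2 * \<alpha> * a_star * K)" by (rule sum_mono) (simp add: stepb)
    also have "\<dots> = real T * (2 * \<alpha> * a_star * K)" by simp
    finally have tot: "norm (w T - w 0) \<le> real T * (2 * \<alpha> * a_star * K)" .
    obtain m where Tm: "T = Suc m" using False by (cases T) auto
    have im: "s * a m \<ge> \<bar>a 0\<bar> + real m * (\<alpha> * qs / 2)" "s * a m > 0" using inv[of m] Tm by auto
    have "s * a m = \<bar>a m\<bar>" using s1 im(2) by auto
    hence hm: "real m * (\<alpha> * qs / 2) \<le> a_star - \<bar>a 0\<bar>" using im belowT[of m] Tm by simp
    have D: "posp (a_star - \<bar>a 0\<bar>) = a_star - \<bar>a 0\<bar>" unfolding posp_def using a0lt by simp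
    have "real m * (2 * \<alpha> * a_star * K) = (real m * (\<alpha> * qs / 2)) * (4 * a_star * K / qs)"
      using qs0 by (simp add: field_simps)
    also have "\<dots> \<le> (a_star - \<bar>a 0\<bar>) * (4 * a_star * K / qs)"
      using hm qs0 K0 assms(6) by (intro mult_right_mono) auto
    also have "\<dots> \<le> 8 * K / qs * a_star * (a_star - \<bar>a 0\<bar>)"
    proof -
      have X: "(a_star - \<bar>a 0\<bar>) * (4 * a_star * K / qs) = 4 * (K / qs * a_star * (a_star - \<bar>a 0\<bar>))"
        by (simp add: algebra_simps)
      have Y: "8 * K / qs * a_star * (a_star - \<bar>a 0\<bar>) = 8 * (K / qs * a_star * (a_star - \<bar>a 0\<bar>))"
        by (simp add: algebra_simps)
      have "K / qs * a_star * (a_star - \<bar>a 0\<bar>) \<ge> 0"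
        using qs0 K0 assms(6) a0lt by (intro mult_nonneg_nonneg) auto
      then show ?thesis unfolding X Y by linarith
    qed
    finally have F1: "real m * (2 * \<alpha> * a_star * K) \<le> 8 * K / qs * a_star * (a_star - \<bar>a 0\<bar>)" .
    have F2: "2 * \<alpha> * a_star * K \<le> 4 * \<alpha> * K * a_star" using assms(4,6) K0 by simp
    have "real T * (2 * \<alpha> * a_star * K) \<le> 8 * K / qs * a_star * posp (a_star - \<bar>a 0\<bar>) + 4 * \<alpha> * K * a_star"
    proof -
      have "real T * (2 * \<alpha> * a_star * K) = real m * (2 * \<alpha> * a_star * K) + 2 * \<alpha> * a_star * K"
        using Tm by (simp add: algebra_simps)
      then show ?thesis unfolding D using F1 F2 by linarith
    qed
    with tot show ?thesis unfolding T_def K_def qs_def by simp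
  qed
qed

end
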